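(* If $M$ is a matroid of rank $r\geq 2$, then $M$ is simple if and only if $M$ is $(r-1,1)$-uniform.
   Context: For positive integers $k,\ell$, a matroid is $(k,\ell)$-uniform if it has no minor isomorphic to $U_{k,k}\oplus U_{0,\ell}$. *)

theory Defs
  imports Main
begin

type_synonym 'a matroid = "'a set \<times> ('a set \<Rightarrow> bool)"

definition ground :: "'a matroid \<Rightarrow> 'a set" where
  "ground M = fst M"

definition indep :: "'a matroid \<Rightarrow> 'a set \<Rightarrow> bool" where
  "indep M = snd M"

definition matroid :: "'a matroid \<Rightarrow> bool" where
  "matroid M \<longleftrightarrow>
     finite (ground M) \<and>
     indep M {} \<and>
     (\<forall>X. indep M X \<longrightarrow> X \<subseteq> ground M) \<and>
     (\<forall>X Y. indep M Y \<and> X \<subseteq> Y \<longrightarrow> indep M X) \<and>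
     (\<forall>X Y. indep M X \<and> indep M Y \<and> card X < card Y \<longrightarrow>
        (\<exists>y\<in>Y - X. indep M (insert y X)))"

definition rk :: "'a matroid \<Rightarrow> 'a set \<Rightarrow> nat" where
  "rk M X = Max (card ` {Y. Y \<subseteq> X \<and> indep M Y})"

definition matroid_rank :: "'a matroid \<Rightarrow> nat" where
  "matroid_rank M = rk M (ground M)"

definition simple :: "'a matroid \<Rightarrow> bool" where
  "simple M \<longleftrightarrow>
     (\<forall>x\<in>ground M. indep M {x}) \<and>
     (\<forall>x\<in>ground M. \<forall>y\<in>ground M. x \<noteq> y \<longrightarrow> indep M {x, y})"

text \<open>The minor M / C \ D (contract C, delete D), with C, D disjoint subsets of E.
  X is independent in M/C iff X avoids C and r(X \<union> C) = |X| + r(C).\<close>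
definition minor_of :: "'a matroid \<Rightarrow> 'a set \<Rightarrow> 'a set \<Rightarrow> 'a matroid" where
  "minor_of M C D =
     (ground M - C - D,
      \<lambda>X. X \<subseteq> ground M - C - D \<and> rk M (X \<union> C) = card X + rk M C)"

definition is_minor :: "'a matroid \<Rightarrow> 'a matroid \<Rightarrow> bool" where
  "is_minor N M \<longleftrightarrow>
     (\<exists>C D. C \<subseteq> ground M \<and> D \<subseteq> ground M \<and> C \<inter> D = {} \<and> N = minor_of M C D)"

definition matroid_iso :: "'a matroid \<Rightarrow> 'b matroid \<Rightarrow> bool" where
  "matroid_iso M N \<longleftrightarrow>
     (\<exists>f. bij_betw f (ground M) (ground N) \<and>
          (\<forall>X. X \<subseteq> ground M \<longrightarrow> (indep M X \<longleftrightarrow> indep N (f ` X))))"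

text \<open>U_{k,k} \<oplus> U_{0,l} on ground set {0..<k+l}: elements < k are coloops,
  the remaining l elements are loops.\<close>
definition U_kk_plus_U0l :: "nat \<Rightarrow> nat \<Rightarrow> nat matroid" where
  "U_kk_plus_U0l k l = ({..<k+l}, \<lambda>X. X \<subseteq> {..<k})"

definition kl_uniform :: "nat \<Rightarrow> nat \<Rightarrow> 'a matroid \<Rightarrow> bool" where
  "kl_uniform k l M \<longleftrightarrow>
     \<not> (\<exists>N. is_minor N M \<and> matroid_iso N (U_kk_plus_U0l k l))"

end

theory Submission
  imports Defs
begin

lemma m_fin: "matroid M \<Longrightarrow> finite (ground M)"
  unfolding matroid_def by (elim conjE)
lemma m_sub: assumes "matroid M" "indep M X" shows "X \<subseteq> ground M"
proof -
  have ax: "\<forall>X. indep M X \<longrightarrow> X \<subseteq> ground M" using assms(1) unfolding matroid_def by (elim conjE)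
  show ?thesis using assms(2) by (rule ax[rule_format])
qed
lemma m_down: assumes "matroid M" "indep M Y" "X \<subseteq> Y" shows "indep M X"
proof -
  have ax: "\<forall>X Y. indep M Y \<and> X \<subseteq> Y \<longrightarrow> indep M X" using assms(1) unfolding matroid_def by (elim conjE)
  show ?thesis by (rule ax[rule_format, of Y X]) (intro conjI assms(2,3))
qed
lemma m_empty: "matroid M \<Longrightarrow> indep M {}"
  unfolding matroid_def by (elim conjE)
lemma m_aug: assumes "matroid M" "indep M X" "indep M Y" "card X < card Y"
  shows "\<exists>y\<in>Y - X. indep M (insert y X)"
proof -
  have ax: "\<forall>X Y. indep M X \<and> indep M Y \<and> card X < card Y \<longrightarrow> (\<exists>y\<in>Y - X. indep M (insert y X))"
    using assms(1) unfolding matroid_def by (elim conjE)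
  show ?thesis by (rule ax[rule_format]) (intro conjI assms(2-4))
qed
lemma m_ifin: "matroid M \<Longrightarrow> indep M X \<Longrightarrow> finite X"
  by (rule finite_subset[OF m_sub m_fin])

lemma rk_fin: assumes "matroid M" shows "finite (card ` {Y. Y \<subseteq> X \<and> indep M Y})"
proof (rule finite_subset)
  show "card ` {Y. Y \<subseteq> X \<and> indep M Y} \<subseteq> {..card (ground M)}"
  proof (rule image_subsetI)
    fix Y assume "Y \<in> {Y. Y \<subseteq> X \<and> indep M Y}"
    then show "card Y \<in> {..card (ground M)}"
      using card_mono[OF m_fin[OF assms] m_sub[OF assms]] by auto
  qed
qed simp

lemma rk_ge: "matroid M \<Longrightarrow> Y \<subseteq> X \<Longrightarrow> indep M Y \<Longrightarrow> card Y \<le> rk M X"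
  unfolding rk_def by (rule Max_ge[OF rk_fin]) auto

lemma rk_obtain: assumes "matroid M" shows "\<exists>Y. Y \<subseteq> X \<and> indep M Y \<and> card Y = rk M X"
proof -
  have "rk M X \<in> card ` {Y. Y \<subseteq> X \<and> indep M Y}"
    unfolding rk_def using rk_fin[OF assms] m_empty[OF assms] by (intro Max_in) auto
  then show ?thesis by auto
qed

lemma rk_mono: assumes "matroid M" "X \<subseteq> X'" shows "rk M X \<le> rk M X'"
  using rk_obtain[OF assms(1), of X] rk_ge[OF assms(1)] assms(2) by (metis order_trans)

lemma rk_le_card: assumes "matroid M" "finite X" shows "rk M X \<le> card X"
  using rk_obtain[OF assms(1), of X] assms(2) by (metis card_mono)

lemma rk_indep: assumes "matroid M" "finite X" shows "indep M X \<longleftrightarrow> rk M X = card X"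
proof
  assume "indep M X" then show "rk M X = card X"
    using rk_ge[OF assms(1), of X X] rk_le_card[OF assms] by simp
next
  assume h: "rk M X = card X"
  obtain Y where "Y \<subseteq> X" "indep M Y" "card Y = rk M X" using rk_obtain[OF assms(1)] by blast
  then have "Y = X" using h assms(2) card_subset_eq by metis
  then show "indep M X" using \<open>indep M Y\<close> by simp
qed

lemma rk_insert: assumes "matroid M" shows "rk M (insert e C) \<le> rk M C + 1"
proof -
  obtain Y where Y: "Y \<subseteq> insert e C" "indep M Y" "card Y = rk M (insert e C)"
    using rk_obtain[OF assms] by blast
  have fY: "finite Y" using m_ifin[OF assms Y(2)] .
  have "indep M (Y - {e})" using m_down[OF assms Y(2)] by blast
  then have "card (Y - {e}) \<le> rk M C" using rk_ge[OF assms] Y(1) by blast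
  moreover have "card Y \<le> card (Y - {e}) + 1" using fY
    by (cases "e \<in> Y") (auto simp: card_Diff_singleton)
  ultimately show ?thesis using Y(3) by linarith
qed

lemma extend: assumes "matroid M" "indep M X" "indep M Y"
  shows "card X \<le> n \<Longrightarrow> n \<le> card Y \<Longrightarrow> \<exists>Z. X \<subseteq> Z \<and> indep M Z \<and> card Z = n"
proof (induction n)
  case 0 then show ?case using assms by auto
next
  case (Suc n)
  show ?case
  proof (cases "card X = Suc n")
    case True then show ?thesis using assms by auto
  next
    case False
    then obtain Z where Z: "X \<subseteq> Z" "indep M Z" "card Z = n" using Suc by fastforce
    then obtain y where "y \<in> Y - Z" "indep M (insert y Z)" using m_aug[OF assms(1) Z(2) assms(3)] Suc by auto
    moreover have "finite Z" using m_ifin[OF assms(1) Z(2)] .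
    ultimately show ?thesis using Z by (intro exI[of _ "insert y Z"]) auto
  qed
qed

lemma iso_lemma:
  assumes "finite B" "e \<notin> B" "card B = k" "ground N = insert e B"
    "\<forall>X. X \<subseteq> ground N \<longrightarrow> (indep N X \<longleftrightarrow> X \<subseteq> B)"
  shows "matroid_iso N (U_kk_plus_U0l k 1)"
proof -
  obtain g where g: "bij_betw g B {..<k}" using finite_same_card_bij[OF assms(1)] assms(3) by fastforce
  define f where "f = g(e := k)"
  have bf: "bij_betw f B {..<k}" using g assms(2) unfolding f_def
    by (metis bij_betw_cong fun_upd_other)
  have fe: "f e = k" by (simp add: f_def)
  have b2: "bij_betw f (insert e B) {..<k+1}"
  proof -
    have "bij_betw f {e} {k}" using fe by (simp add: bij_betw_def)
    from bij_betw_combine[OF bf this] have "bij_betw f (B \<union> {e}) ({..<k} \<union> {k})" by simp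
    moreover have "B \<union> {e} = insert e B" by blast
    moreover have "{..<k} \<union> {k} = {..<k+1}" by auto
    ultimately show ?thesis by simp
  qed
  show ?thesis unfolding matroid_iso_def
  proof (intro exI conjI allI impI)
    show "bij_betw f (ground N) (ground (U_kk_plus_U0l k 1))"
      using b2 assms(4) by (simp add: ground_def U_kk_plus_U0l_def)
    fix X assume X: "X \<subseteq> ground N"
    have "f ` X \<subseteq> {..<k} \<longleftrightarrow> X \<subseteq> B"
    proof
      assume h: "f ` X \<subseteq> {..<k}"
      have "e \<notin> X" using h fe by auto
      then show "X \<subseteq> B" using X assms(4) by auto
    next
      assume "X \<subseteq> B"
      then have "f ` X \<subseteq> f ` B" by (rule image_mono)
      then show "f ` X \<subseteq> {..<k}" using bij_betw_imp_surj_on[OF bf] by simp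
    qed
    then show "indep N X = indep (U_kk_plus_U0l k 1) (f ` X)"
      using assms(5) X by (simp add: indep_def U_kk_plus_U0l_def)
  qed
qed

lemma gm: "ground (minor_of M C D) = ground M - C - D"
  by (simp add: ground_def minor_of_def)
lemma im: "indep (minor_of M C D) X = (X \<subseteq> ground M - C - D \<and> rk M (X \<union> C) = card X + rk M C)"
  by (simp add: indep_def minor_of_def)
lemma gU: "ground (U_kk_plus_U0l k l) = {..<k+l}"
  by (simp add: ground_def U_kk_plus_U0l_def)
lemma iU: "indep (U_kk_plus_U0l k l) Y = (Y \<subseteq> {..<k})"
  by (simp add: indep_def U_kk_plus_U0l_def)

lemma rk_empty: "matroid M \<Longrightarrow> rk M {} = 0"
  using rk_le_card[of M "{}"] by simp

theorem lemma2p2: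
  fixes M :: "'a matroid" and r :: nat
  assumes "matroid M" and "matroid_rank M = r" and "r \<ge> 2"
  shows "simple M \<longleftrightarrow> kl_uniform (r - 1) 1 M"
proof
  have mM: "matroid M" by fact
  assume sM: "simple M"
  show "kl_uniform (r - 1) 1 M"
    unfolding kl_uniform_def
  proof
    assume "\<exists>N. is_minor N M \<and> matroid_iso N (U_kk_plus_U0l (r - 1) 1)"
    then obtain N where N1: "is_minor N M" and N2: "matroid_iso N (U_kk_plus_U0l (r - 1) 1)" by blast
    from N1 obtain C D where CD: "C \<subseteq> ground M" "D \<subseteq> ground M" "C \<inter> D = {}"
      and NCD: "N = minor_of M C D" unfolding is_minor_def by (elim exE conjE) (rule that; assumption)
    from N2 obtain f where bf0: "bij_betw f (ground N) (ground (U_kk_plus_U0l (r - 1) 1))"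
      and iso0: "\<And>X. X \<subseteq> ground N \<Longrightarrow> indep N X = indep (U_kk_plus_U0l (r - 1) 1) (f ` X)"
      unfolding matroid_iso_def by (elim exE conjE) (rule that; simp)
    have bf: "bij_betw f (ground M - C - D) {..<r - 1 + 1}"
      using bf0 unfolding NCD gm gU .
    have iso: "\<And>X. X \<subseteq> ground M - C - D \<Longrightarrow>
           ((X \<subseteq> ground M - C - D \<and> rk M (X \<union> C) = card X + rk M C) \<longleftrightarrow> f ` X \<subseteq> {..<r - 1})"
      using iso0 unfolding NCD gm im iU .
    define G where "G = ground M - C - D"
    have fG: "finite G" using m_fin[OF mM] by (simp add: G_def)
    have r1: "r - 1 + 1 = r" using assms(3) by simp
    have cG: "card G = r" using bij_betw_same_card[OF bf] r1 by (simp add: G_def)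
    obtain e where e: "e \<in> G" "f e = r - 1"
    proof -
      have "r - 1 \<in> f ` G" using bf unfolding bij_betw_def G_def by simp
      then obtain x where "x \<in> G" "r - 1 = f x" by (rule imageE)
      then show ?thesis using that by simp
    qed
    define B where "B = G - {e}"
    have "f ` B \<subseteq> {..<r - 1}"
    proof
      fix y assume "y \<in> f ` B"
      then obtain x where x: "x \<in> B" "y = f x" by auto
      have "f x < r" using bf x r1 unfolding B_def G_def bij_betw_def by auto
      moreover have "f x \<noteq> f e" using bf x e unfolding B_def G_def bij_betw_def inj_on_def by auto
      ultimately show "y \<in> {..<r - 1}" using x e by auto
    qed
    then have "rk M (B \<union> C) = card B + rk M C" using iso[of B] by (auto simp: B_def G_def)
    moreover have "card B = r - 1" using cG e fG by (simp add: B_def)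
    moreover have "rk M (B \<union> C) \<le> r"
      using rk_mono[OF mM, of "B \<union> C" "ground M"] CD assms(2)
      by (auto simp: B_def G_def matroid_rank_def)
    ultimately have rC: "rk M C \<le> 1" using assms(3) by linarith
    have eC: "e \<notin> C" "e \<in> ground M" using e by (auto simp: G_def)
    have "\<not> (f ` {e} \<subseteq> {..<r - 1})" using e by simp
    then have ne: "rk M ({e} \<union> C) \<noteq> 1 + rk M C" using iso[of "{e}"] e by (auto simp: G_def)
    show False
    proof (cases "rk M C = 0")
      case True
      have "C = {}"
      proof (rule ccontr)
        assume "C \<noteq> {}"
        then obtain c where "c \<in> C" by auto
        then have "card {c} \<le> rk M C" using rk_ge[OF mM, of "{c}" C] sM CD(1)
          unfolding simple_def by auto
        then show False using True by simp
      qed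
      moreover have "rk M {e} = 1" using rk_indep[OF mM, of "{e}"] sM eC unfolding simple_def by auto
      ultimately show False using ne True by simp
    next
      case False
      then have r1C: "rk M C = 1" using rC by simp
      have "C \<noteq> {}" using r1C rk_empty[OF mM] by auto
      then obtain c where c: "c \<in> C" by auto
      have "indep M {e, c}" using sM eC c CD(1) unfolding simple_def by (metis in_mono)
      then have "card {e, c} \<le> rk M ({e} \<union> C)" using rk_ge[OF mM, of "{e,c}"] c by auto
      moreover have "c \<noteq> e" using c eC by auto
      then have "card {e, c} = 2" by simp
      moreover have "rk M ({e} \<union> C) \<le> rk M C + 1" using rk_insert[OF mM, of e C] by simp
      ultimately show False using ne r1C by simp
    qed
  qed
next
  have mM: "matroid M" by fact
  assume ku: "kl_uniform (r - 1) 1 M"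
  obtain Bf where Bf: "Bf \<subseteq> ground M" "indep M Bf" "card Bf = r"
  proof -
    obtain Y where "Y \<subseteq> ground M" "indep M Y" "card Y = rk M (ground M)"
      using rk_obtain[OF mM, of "ground M"] by blast
    then show ?thesis using that assms(2) unfolding matroid_rank_def by blast
  qed
  show "simple M"
  proof (rule ccontr)
    assume ns: "\<not> simple M"
    have "\<exists>N. is_minor N M \<and> matroid_iso N (U_kk_plus_U0l (r - 1) 1)"
    proof (cases "\<forall>x\<in>ground M. indep M {x}")
      case False
      then obtain e where e: "e \<in> ground M" "\<not> indep M {e}" by auto
      have "r - 1 \<le> card Bf" using Bf(3) by simp
      then obtain B where B: "B \<subseteq> Bf" "card B = r - 1"
        using obtain_subset_with_card_n[of "r - 1" Bf] by metis
      have iB: "indep M B" using m_down[OF mM Bf(2) B(1)] .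
      have fB: "finite B" using m_ifin[OF mM iB] .
      have eB: "e \<notin> B" using m_down[OF mM iB, of "{e}"] e by auto
      define D where "D = ground M - insert e B"
      have gB: "B \<subseteq> ground M" using B Bf by auto
      have g: "ground M - {} - D = insert e B" using gB e by (auto simp: D_def)
      let ?N = "minor_of M {} D"
      have "matroid_iso ?N (U_kk_plus_U0l (r - 1) 1)"
      proof (rule iso_lemma[OF fB eB B(2)])
        show "ground ?N = insert e B" using g by (simp add: minor_of_def ground_def)
        show "\<forall>X. X \<subseteq> ground ?N \<longrightarrow> indep ?N X = (X \<subseteq> B)"
        proof (intro allI impI)
          fix X assume "X \<subseteq> ground ?N"
          then have X: "X \<subseteq> insert e B" using g by (simp add: minor_of_def ground_def)
          have fX: "finite X" using X fB finite_subset by blast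
          have "indep ?N X \<longleftrightarrow> indep M X"
            using X g rk_indep[OF mM fX] rk_empty[OF mM] by (simp add: minor_of_def indep_def)
          also have "\<dots> \<longleftrightarrow> X \<subseteq> B"
          proof
            assume "indep M X"
            then have "e \<notin> X" using m_down[OF mM, of X "{e}"] e by auto
            then show "X \<subseteq> B" using X by auto
          qed (rule m_down[OF mM iB])
          finally show "indep ?N X = (X \<subseteq> B)" .
        qed
      qed
      moreover have "is_minor ?N M" unfolding is_minor_def
        by (rule exI[of _ "{}"], rule exI[of _ D]) (auto simp: D_def)
      ultimately show ?thesis by blast
    next
      case True
      then obtain x y where xy: "x \<in> ground M" "y \<in> ground M" "x \<noteq> y" "\<not> indep M {x, y}"
        using ns unfolding simple_def by auto
      have ix: "indep M {x}" using True xy by auto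
      obtain Z where Z: "{x} \<subseteq> Z" "indep M Z" "card Z = r"
        using extend[OF mM ix Bf(2), of r] Bf assms(3) by auto
      define B where "B = Z - {x}"
      have fZ: "finite Z" using m_ifin[OF mM Z(2)] .
      have fB: "finite B" using fZ by (simp add: B_def)
      have cB: "card B = r - 1" using Z fZ by (simp add: B_def)
      have yZ: "y \<notin> Z" using m_down[OF mM Z(2), of "{x,y}"] Z(1) xy(4) by auto
      have yB: "y \<notin> B" using yZ by (simp add: B_def)
      have gZ: "Z \<subseteq> ground M" using m_sub[OF mM Z(2)] .
      define D where "D = ground M - Z - {y}"
      have g: "ground M - {x} - D = insert y B" using gZ xy Z(1) by (auto simp: D_def B_def)
      have rx: "rk M {x} = 1" using rk_indep[OF mM, of "{x}"] ix by simp
      let ?N = "minor_of M {x} D"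
      have "matroid_iso ?N (U_kk_plus_U0l (r - 1) 1)"
      proof (rule iso_lemma[OF fB yB cB])
        show "ground ?N = insert y B" using g by (simp add: minor_of_def ground_def)
        show "\<forall>X. X \<subseteq> ground ?N \<longrightarrow> indep ?N X = (X \<subseteq> B)"
        proof (intro allI impI)
          fix X assume "X \<subseteq> ground ?N"
          then have X: "X \<subseteq> insert y B" using g by (simp add: minor_of_def ground_def)
          have fX: "finite X" using X fB finite_subset by blast
          have xX: "x \<notin> X" using X xy(3) by (auto simp: B_def)
          have cX: "card (insert x X) = card X + 1" using fX xX by simp
          have "indep ?N X \<longleftrightarrow> indep M (insert x X)"
            using X g rk_indep[OF mM, of "insert x X"] fX rx cX by (simp add: minor_of_def indep_def)
          also have "\<dots> \<longleftrightarrow> X \<subseteq> B"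
          proof
            assume "indep M (insert x X)"
            then have "y \<notin> X" using m_down[OF mM, of "insert x X" "{x,y}"] xy by auto
            then show "X \<subseteq> B" using X by auto
          next
            assume "X \<subseteq> B"
            then have "insert x X \<subseteq> Z" using Z(1) by (auto simp: B_def)
            then show "indep M (insert x X)" by (rule m_down[OF mM Z(2)])
          qed
          finally show "indep ?N X = (X \<subseteq> B)" .
        qed
      qed
      moreover have "is_minor ?N M" unfolding is_minor_def
        by (rule exI[of _ "{x}"], rule exI[of _ D]) (use xy Z(1) in \<open>auto simp: D_def\<close>)
      ultimately show ?thesis by blast
    qed
    then show False using ku unfolding kl_uniform_def by blast
  qed
qed

end
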